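(* Let $K,T\subset\mathbb{R}^n$ be convex bodies and let $q=(q_1,\dots,q_m)$ be a closed $(K,T)$-Minkowski billiard trajectory with respect to the $K$-supporting hyperplanes $H_1,\dots,H_m$. Let $U$ be the inclusion-minimal linear subspace of $\mathbb{R}^n$ containing the outer unit normal vectors $n_K(q_1),\dots,n_K(q_m)$ normal to $H_1,\dots,H_m$. Then there is a selection $\{i_1,\dots,i_{\dim U+1}\}\subseteq\{1,\dots,m\}$ such that $\{q_{i_1},\dots,q_{i_{\dim U+1}}\}\in F(K)$.
   Context: A convex body is a compact convex set in $\mathbb{R}^n$ containing the origin in its interior. For a convex body $K$, $F(K)$ denotes the set of subsets of $\mathbb{R}^n$ which cannot be translated into the interior of $K$. For a convex set $C$ and $z\in\partial C$, $N_C(z)=\{v:\langle v,y-z\rangle\le 0\ \forall y\in C\}$. A closed polygonal curve $(q_1,\dots,q_m)$, $m\ge2$, always satisfies $q_j\ne q_{j+1}$ and $q_j\notin[q_{j-1},q_{j+1}]$ (indices mod $m$). A closed polygonal curve $q$ with vertices on $\partial K$ is a closed $(K,T)$-Minkowski billiard trajectory with respect to the $K$-supporting hyperplanes $H_1,\dots,H_m$ through $q_1,\dots,q_m$ if there are $p_1,\dots,p_m\in\partial T$, outer unit normals $n_K(q_j)\in N_K(q_j)$ normal to $H_j$, and $\mu_j\ge 0$ with $q_{j+1}-q_j\in N_T(p_j)$ and $p_{j+1}-p_j=-\mu_{j+1}n_K(q_{j+1})$ for all $j$. *)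

theory Defs
  imports "HOL-Analysis.Analysis"
begin

definition convex_body :: "'a::euclidean_space set \<Rightarrow> bool" where
  "convex_body K \<longleftrightarrow> compact K \<and> convex K \<and> 0 \<in> interior K"

definition Fset :: "'a::euclidean_space set \<Rightarrow> 'a set set" where
  "Fset K = {S. \<not> (\<exists>t. (\<lambda>x. x + t) ` S \<subseteq> interior K)}"

definition normal_cone :: "'a::euclidean_space set \<Rightarrow> 'a \<Rightarrow> 'a set" where
  "normal_cone C z = {v. \<forall>y\<in>C. v \<bullet> (y - z) \<le> 0}"

definition closed_polygonal_curve :: "nat \<Rightarrow> (nat \<Rightarrow> 'a::euclidean_space) \<Rightarrow> bool" where
  "closed_polygonal_curve m q \<longleftrightarrow> m \<ge> 2 \<and>
     (\<forall>j<m. q j \<noteq> q ((j + 1) mod m) \<and>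
            q j \<notin> closed_segment (q ((j + m - 1) mod m)) (q ((j + 1) mod m)))"

text \<open>Closed (K,T)-Minkowski billiard trajectory q with respect to the K-supporting
  hyperplanes H 0, ..., H (m-1), where nK j is the chosen outer unit normal at q j
  normal to H j.\<close>
definition minkowski_billiard ::
  "'a::euclidean_space set \<Rightarrow> 'a set \<Rightarrow> nat \<Rightarrow> (nat \<Rightarrow> 'a) \<Rightarrow> (nat \<Rightarrow> 'a set) \<Rightarrow> (nat \<Rightarrow> 'a) \<Rightarrow> bool"
where
  "minkowski_billiard K T m q H nK \<longleftrightarrow>
     closed_polygonal_curve m q \<and>
     (\<forall>j<m. q j \<in> frontier K) \<and>
     (\<forall>j<m. norm (nK j) = 1 \<and> nK j \<in> normal_cone K (q j) \<and>
            H j = {x. nK j \<bullet> x = nK j \<bullet> q j} \<and> K \<subseteq> {x. nK j \<bullet> x \<le> nK j \<bullet> q j}) \<and>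
     (\<exists>p \<mu>. (\<forall>j<m. p j \<in> frontier T \<and> \<mu> j \<ge> (0::real) \<and>
              q ((j + 1) mod m) - q j \<in> normal_cone T (p j) \<and>
              p ((j + 1) mod m) - p j = - (\<mu> ((j + 1) mod m) *\<^sub>R nK ((j + 1) mod m))))"

end

theory Submission
  imports Defs
begin

lemma sum_shift_mod:
  fixes m :: nat
  assumes "m > 0"
  shows "(\<Sum>j<m. f ((j + 1) mod m)) = (\<Sum>j<m. (f j :: 'b::comm_monoid_add))"
proof -
  obtain k where k: "m = Suc k" using assms by (cases m) auto
  have "(\<Sum>j<Suc k. f ((j + 1) mod Suc k)) = (\<Sum>j<k. f ((j + 1) mod Suc k)) + f 0"
    by (simp add: sum.lessThan_Suc)
  also have "(\<Sum>j<k. f ((j + 1) mod Suc k)) = (\<Sum>j<k. f (Suc j))"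
    by (rule sum.cong) auto
  also have "(\<Sum>j<k. f (Suc j)) + f 0 = (\<Sum>j<Suc k. f j)"
    by (subst sum.lessThan_Suc_shift) (simp add: add.commute)
  finally show ?thesis using k by simp
qed

lemma normal_cone_pos:
  fixes T :: "'a::euclidean_space set"
  assumes "cball 0 r \<subseteq> T" "r > 0" "v \<in> normal_cone T p"
  shows "r * norm v \<le> v \<bullet> p"
proof (cases "v = 0")
  case True then show ?thesis by simp
next
  case False
  define y where "y = (r / norm v) *\<^sub>R v"
  have "y \<in> cball 0 r" using False assms(2) by (simp add: y_def)
  then have "y \<in> T" using assms(1) by auto
  then have "v \<bullet> (y - p) \<le> 0" using assms(3) by (auto simp: normal_cone_def)
  moreover have "v \<bullet> y = r * norm v"
    using False by (simp add: y_def power2_norm_eq_inner[symmetric] power2_eq_square)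
  ultimately show ?thesis by (simp add: inner_diff_right)
qed

theorem proposition3p10:
  fixes K T :: "'a::euclidean_space set" and q nK :: "nat \<Rightarrow> 'a"
    and H :: "nat \<Rightarrow> 'a set" and m :: nat
  assumes "convex_body K" and "convex_body T"
    and "minkowski_billiard K T m q H nK"
  shows "\<exists>I. I \<subseteq> {..<m} \<and> card I = dim (span (nK ` {..<m})) + 1 \<and> q ` I \<in> Fset K"
proof -
  note mb = assms(3)[unfolded minkowski_billiard_def]
  have m2: "m \<ge> 2" using mb by (simp add: closed_polygonal_curve_def)
  have qneq: "\<And>j. j < m \<Longrightarrow> q j \<noteq> q ((j + 1) mod m)" using mb by (simp add: closed_polygonal_curve_def)
  have nKprops: "\<And>j. j < m \<Longrightarrow> norm (nK j) = 1 \<and> K \<subseteq> {x. nK j \<bullet> x \<le> nK j \<bullet> q j}"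
    using mb by blast
  obtain p \<mu> where pm: "\<And>j. j < m \<Longrightarrow> p j \<in> frontier T \<and> \<mu> j \<ge> (0::real) \<and>
              q ((j + 1) mod m) - q j \<in> normal_cone T (p j) \<and>
              p ((j + 1) mod m) - p j = - (\<mu> ((j + 1) mod m) *\<^sub>R nK ((j + 1) mod m))"
    using mb by blast
  have m0: "m > 0" using m2 by simp
  have sum0: "(\<Sum>j<m. \<mu> j *\<^sub>R nK j) = 0"
  proof -
    have "(\<Sum>j<m. p ((j + 1) mod m) - p j) = 0"
      using sum_shift_mod[OF m0, of p] by (simp add: sum_subtractf)
    moreover have "(\<Sum>j<m. p ((j + 1) mod m) - p j) = - (\<Sum>j<m. \<mu> ((j + 1) mod m) *\<^sub>R nK ((j + 1) mod m))"
      using pm by (simp add: sum_negf[symmetric])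
    moreover have "(\<Sum>j<m. \<mu> ((j + 1) mod m) *\<^sub>R nK ((j + 1) mod m)) = (\<Sum>j<m. \<mu> j *\<^sub>R nK j)"
      using sum_shift_mod[OF m0, of "\<lambda>j. \<mu> j *\<^sub>R nK j"] by simp
    ultimately show ?thesis by simp
  qed
  have ex_pos: "\<exists>j<m. \<mu> j > 0"
  proof (rule ccontr)
    assume "\<not> ?thesis"
    then have mu0: "\<And>j. j < m \<Longrightarrow> \<mu> j = 0" using pm by force
    have pc: "\<And>j. j < m \<Longrightarrow> p ((j + 1) mod m) = p j"
      using pm mu0 by (metis add.inverse_neutral eq_iff_diff_eq_0 m0 mod_less_divisor scale_zero_left)
    have pconst: "j < m \<Longrightarrow> p j = p 0" for j
    proof (induction j)
      case 0 then show ?case by simp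
    next
      case (Suc j)
      have e1: "p (Suc j) = p ((j + 1) mod m)" using Suc.prems by simp
      have jm: "j < m" using Suc.prems by simp
      have e2: "p ((j + 1) mod m) = p j" by (rule pc[OF jm])
      have e3: "p j = p 0" using Suc by simp
      show ?case using e1 e2 e3 by simp
    qed
    obtain r where r: "r > 0" "cball 0 r \<subseteq> T"
      using assms(2) unfolding convex_body_def by (meson mem_interior_cball)
    define v where "v j = q ((j + 1) mod m) - q j" for j
    have vn: "\<And>j. j < m \<Longrightarrow> r * norm (v j) \<le> v j \<bullet> p 0"
      using normal_cone_pos[OF r(2) r(1)] pm pconst unfolding v_def by metis
    have "(\<Sum>j<m. v j) = 0" unfolding v_def
      using sum_shift_mod[OF m0, of q] by (simp add: sum_subtractf)
    then have "(\<Sum>j<m. v j \<bullet> p 0) = 0" by (simp add: inner_sum_left[symmetric])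
    moreover have "(\<Sum>j<m. r * norm (v j)) \<le> (\<Sum>j<m. v j \<bullet> p 0)"
      by (rule sum_mono) (simp add: vn)
    moreover have "r * norm (v 0) \<le> (\<Sum>j<m. r * norm (v j))"
      using m0 r(1) by (intro member_le_sum) auto
    moreover have "v 0 \<noteq> 0" using qneq[OF m0] by (simp add: v_def)
    ultimately show False using r(1) by (smt (verit) mult_pos_pos zero_less_norm_iff)
  qed
  define A where "A = {j. j < m \<and> \<mu> j > 0}"
  have finA: "finite A" by (simp add: A_def)
  define M where "M = (\<Sum>j\<in>A. \<mu> j)"
  have Mpos: "M > 0" unfolding M_def using ex_pos finA
    by (metis (mono_tags, lifting) A_def mem_Collect_eq sum_pos2 less_imp_le)
  have sumA: "(\<Sum>j\<in>A. \<mu> j *\<^sub>R nK j) = 0"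
  proof -
    have "(\<Sum>j<m. \<mu> j *\<^sub>R nK j) = (\<Sum>j\<in>A. \<mu> j *\<^sub>R nK j)"
      by (rule sum.mono_neutral_right) (use pm in \<open>auto simp: A_def less_le\<close>)
    then show ?thesis using sum0 by simp
  qed
  have zhull: "0 \<in> convex hull (nK ` A)"
  proof -
    have "(\<Sum>j\<in>A. (\<mu> j / M) *\<^sub>R nK j) \<in> convex hull (nK ` A)"
    proof (rule convex_sum[OF finA])
      show "sum (\<lambda>j. \<mu> j / M) A = 1" using Mpos by (simp add: M_def sum_divide_distrib[symmetric])
      show "\<And>i. i \<in> A \<Longrightarrow> 0 \<le> \<mu> i / M" using Mpos by (auto simp: A_def)
      show "\<And>i. i \<in> A \<Longrightarrow> nK i \<in> convex hull nK ` A" by (simp add: hull_inc)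
    qed (simp add: convex_convex_hull)
    moreover have "(\<Sum>j\<in>A. (\<mu> j / M) *\<^sub>R nK j) = (1/M) *\<^sub>R (\<Sum>j\<in>A. \<mu> j *\<^sub>R nK j)"
      by (simp add: scaleR_sum_right)
    ultimately show ?thesis using sumA by simp
  qed
  define N where "N = nK ` {..<m}"
  define d where "d = dim (span N)"
  obtain S where S: "finite S" "S \<subseteq> nK ` A" "card S \<le> aff_dim (nK ` A) + 1" "0 \<in> convex hull S"
    using zhull caratheodory_aff_dim[of "nK ` A"] by blast
  have "aff_dim (nK ` A) \<le> aff_dim (span N)"
    by (rule aff_dim_subset) (auto simp: N_def A_def intro: span_base)
  also have "\<dots> = int d" by (simp add: aff_dim_subspace d_def)
  finally have cardS: "card S \<le> d + 1" using S(3) by linarith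
  define g where "g v = (SOME j. j \<in> A \<and> nK j = v)" for v
  have g: "g v \<in> A \<and> nK (g v) = v" if "v \<in> S" for v
  proof -
    have "\<exists>j. j \<in> A \<and> nK j = v" using S(2) that by blast
    then show ?thesis unfolding g_def by (rule someI_ex)
  qed
  define I0 where "I0 = g ` S"
  have injg: "inj_on g S" by (metis g inj_onI)
  have cardI0: "card I0 = card S" unfolding I0_def using card_image[OF injg] .
  have I0A: "I0 \<subseteq> A" using g by (auto simp: I0_def)
  have nKI0: "nK ` I0 = S" using g by (force simp: I0_def image_image)
  have dm: "d < m"
  proof -
    have finN: "finite N" by (simp add: N_def)
    have dle: "d \<le> card N" unfolding d_def by (rule dim_le_card[OF _ finN]) simp
    have cN: "card N \<le> m" unfolding N_def using card_image_le[of "{..<m}" nK] by simp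
    show ?thesis
    proof (rule ccontr)
      assume "\<not> d < m"
      then have eq: "card N = m" "d = card N" using dle cN by auto
      then have inj: "inj_on nK {..<m}" unfolding N_def by (simp add: eq_card_imp_inj_on)
      have ind: "independent N"
        using card_eq_dim[of N "span N"] eq finN by (simp add: d_def span_superset)
      define u where "u v = \<mu> (the_inv_into {..<m} nK v)" for v
      have "(\<Sum>v\<in>N. u v *\<^sub>R v) = (\<Sum>j<m. u (nK j) *\<^sub>R nK j)"
        unfolding N_def by (rule sum.reindex[OF inj, unfolded comp_def])
      also have "\<dots> = (\<Sum>j<m. \<mu> j *\<^sub>R nK j)"
        by (rule sum.cong) (auto simp: u_def the_inv_into_f_f[OF inj])
      finally have s0: "(\<Sum>v\<in>N. u v *\<^sub>R v) = 0" using sum0 by simp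
      obtain j0 where j0: "j0 < m" "\<mu> j0 > 0" using ex_pos by blast
      have "u (nK j0) \<noteq> 0" using j0 by (simp add: u_def the_inv_into_f_f[OF inj])
      moreover have "nK j0 \<in> N" using j0 by (simp add: N_def)
      ultimately have "dependent N" using dependent_finite[OF finN] s0 by blast
      then show False using ind by simp
    qed
  qed
  obtain I where I: "I0 \<subseteq> I" "I \<subseteq> {..<m}" "card I = d + 1"
    using exists_subset_between[of I0 "d+1" "{..<m}"] cardI0 cardS dm I0A
    by (auto simp: A_def)
  have "q ` I \<in> Fset K"
    unfolding Fset_def
  proof (clarify)
    fix t assume sub: "(\<lambda>x. x + t) ` q ` I \<subseteq> interior K"
    have "S \<subseteq> {x. t \<bullet> x < 0}"
    proof
      fix v assume "v \<in> S"
      then obtain j where j: "j \<in> I0" "nK j = v" using nKI0 by blast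
      have jm: "j < m" using j I0A by (auto simp: A_def)
      have "q j + t \<in> interior K" using sub j I by blast
      also have "interior K \<subseteq> interior {x. nK j \<bullet> x \<le> nK j \<bullet> q j}"
        using nKprops[OF jm] by (intro interior_mono) auto
      also have "\<dots> = {x. nK j \<bullet> x < nK j \<bullet> q j}"
        using nKprops[OF jm] by (intro interior_halfspace_le) auto
      finally have "nK j \<bullet> t < 0" by (simp add: inner_add_right)
      then show "v \<in> {x. t \<bullet> x < 0}" using j by (simp add: inner_commute)
    qed
    then have "convex hull S \<subseteq> {x. t \<bullet> x < 0}"
      by (rule hull_minimal) (rule convex_halfspace_lt)
    then show False using S(4) by auto
  qed
  then show ?thesis using I unfolding d_def N_def by blast
qed

end
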